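(* Let $n=p_1^{\alpha_1}p_2^{\alpha_2}\cdots p_r^{\alpha_r}$, where $r\geq 2$, $\alpha_1,\ldots,\alpha_r$ are positive integers and $p_1<p_2<\cdots<p_r$ are primes. Let $m=p_{k_1}^{\beta_{k_1}}p_{k_2}^{\beta_{k_2}}\cdots p_{k_s}^{\beta_{k_s}}$, where $2\leq s\leq r$, $k_1<k_2<\cdots<k_s$ and $1\leq\beta_{k_i}\leq\alpha_{k_i}$ for $1\leq i\leq s$. Suppose that at least one of the following holds: (i) $2\phi(p_1p_2\cdots p_r)\geq p_1p_2\cdots p_r$; (ii) $\phi(p_{j+1})\geq r\,\phi(p_j)$ for each $j\in\{1,2,\ldots,r-1\}$. Then $\deg(m)>\deg(m/p_{k_i})$ in $\mathcal{P}(C_n)$ for every $i\in\{1,2,\ldots,s-1\}$.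
   Context: For a finite group $G$, the power graph $\mathcal{P}(G)$ is the simple undirected graph with vertex set $G$ in which two distinct vertices are adjacent if one is an integral power of the other. $C_n$ denotes the cyclic group of order $n$, identified with $\mathbb{Z}_n=\{0,1,\ldots,n-1\}$, so a positive divisor $d$ of $n$ is regarded as the element $d\bmod n\in\mathbb{Z}_n$. $\deg(a)$ is the degree of vertex $a$ in $\mathcal{P}(C_n)$ and $\phi$ is Euler's totient function. *)

theory Defs
  imports "HOL-Number_Theory.Number_Theory"
begin

text \<open>Power graph of the cyclic group C_n, identified with Z_n = {0,...,n-1} (additive).
  b is an integral power of a iff b = k*a mod n for some integer k.\<close>
definition is_power_Cn :: "nat \<Rightarrow> nat \<Rightarrow> nat \<Rightarrow> bool" where
  "is_power_Cn n b a \<longleftrightarrow> (\<exists>k::int. int b = (k * int a) mod int n)"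

definition pg_adj :: "nat \<Rightarrow> nat \<Rightarrow> nat \<Rightarrow> bool" where
  "pg_adj n a b \<longleftrightarrow> a < n \<and> b < n \<and> a \<noteq> b \<and> (is_power_Cn n b a \<or> is_power_Cn n a b)"

definition pg_deg :: "nat \<Rightarrow> nat \<Rightarrow> nat" where
  "pg_deg n a = card {b. b < n \<and> pg_adj n a b}"

end

theory Submission
  imports Defs
begin


lemma pow_iff:
  assumes "n > 0" "b < n"
  shows "is_power_Cn n b a \<longleftrightarrow> gcd a n dvd b"
proof
  assume "is_power_Cn n b a"
  then obtain k where k: "int b = (k * int a) mod int n" by (auto simp: is_power_Cn_def)
  have "gcd (int a) (int n) dvd (k * int a) mod int n"
    by (simp add: dvd_mod)
  hence "int (gcd a n) dvd int b" using k by simp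
  thus "gcd a n dvd b" by simp
next
  assume "gcd a n dvd b"
  then obtain c where c: "b = gcd a n * c" by auto
  obtain u v where uv: "u * int a + v * int n = gcd (int a) (int n)" using bezout_int by blast
  have "(int c * u * int a) mod int n = (int c * u * int a + (int c * v) * int n) mod int n"
    by (simp only: mod_mult_self1)
  also have "int c * u * int a + (int c * v) * int n = int c * (u * int a + v * int n)"
    by (simp add: algebra_simps)
  also have "\<dots> = int b" using uv c assms by (simp add: gcd_int_def mult.commute)
  also have "int b mod int n = int b" using assms(2) by (metis mod_less of_nat_mod)
  finally show "is_power_Cn n b a" unfolding is_power_Cn_def by metis
qed

lemma adj_iff:
  assumes "n > 0"
  shows "pg_adj n a b \<longleftrightarrow> a < n \<and> b < n \<and> a \<noteq> b \<and> (gcd a n dvd gcd b n \<or> gcd b n dvd gcd a n)"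
  using assms unfolding pg_adj_def
  by (auto simp: pow_iff)

definition TT :: "nat \<Rightarrow> nat \<Rightarrow> nat set" where
  "TT n G = {b. b < n \<and> (G dvd gcd b n \<or> gcd b n dvd G)}"

lemma deg_TT:
  assumes "n > 0" "a < n"
  shows "pg_deg n a = card (TT n (gcd a n)) - 1"
proof -
  have "{b. b < n \<and> pg_adj n a b} = TT n (gcd a n) - {a}"
    using assms by (auto simp: adj_iff TT_def)
  moreover have "a \<in> TT n (gcd a n)" using assms by (auto simp: TT_def)
  moreover have "finite (TT n (gcd a n))" by (auto simp: TT_def)
  ultimately show ?thesis by (simp add: pg_deg_def)
qed



lemma card_mult:
  assumes "d > 0" "d dvd n"
  shows "card {b. b < n \<and> d dvd b} = n div d"
proof -
  have "{b. b < n \<and> d dvd b} = (\<lambda>k. d * k) ` {..<n div d}"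
  proof (rule Set.set_eqI, rule iffI)
    fix b assume "b \<in> {b. b < n \<and> d dvd b}"
    then obtain k where "b = d * k" "d * k < n" by auto
    moreover have "k < n div d" using calculation assms
      by (metis dvd_div_mult_self mult.commute mult_less_cancel1)
    ultimately show "b \<in> (\<lambda>k. d * k) ` {..<n div d}" by auto
  next
    fix b assume "b \<in> (\<lambda>k. d * k) ` {..<n div d}"
    then obtain k where "b = d * k" "k < n div d" by auto
    thus "b \<in> {b. b < n \<and> d dvd b}" using assms
      by (metis dvd_div_mult_self dvd_triv_left mem_Collect_eq mult.commute mult_less_cancel1)
  qed
  moreover have "inj_on (\<lambda>k. d * k) {..<n div d}" using assms by (auto simp: inj_on_def)
  ultimately show ?thesis by (simp add: card_image)
qed

lemma card_gcd:
  assumes "n > 0" "d dvd n" "d \<noteq> n"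
  shows "card {b. b < n \<and> gcd b n = d} = totient (n div d)"
proof -
  have "{b. b < n \<and> gcd b n = d} = {k\<in>{0<..n}. gcd k n = d}"
  proof (rule Set.set_eqI)
    fix b show "b \<in> {b. b < n \<and> gcd b n = d} \<longleftrightarrow> b \<in> {k\<in>{0<..n}. gcd k n = d}"
    proof (cases "b = 0 \<or> b = n")
      case True thus ?thesis using assms by auto
    next
      case False thus ?thesis by auto
    qed
  qed
  thus ?thesis using card_gcd_eq_totient[OF assms(1,2)] by simp
qed

lemma tot_super:
  assumes "a > 0" "b > 0"
  shows "totient a * totient b \<le> totient (a * b)"
proof -
  have g: "totient (gcd a b) > 0" "totient (gcd a b) \<le> gcd a b" using assms by (auto simp: totient_le)
  have "totient a * totient b * totient (gcd a b) \<le> totient a * totient b * gcd a b"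
    using g by simp
  also have "\<dots> = totient (a * b) * totient (gcd a b)" by (simp add: totient_gcd)
  finally have "totient a * totient b * totient (gcd a b) \<le> totient (a * b) * totient (gcd a b)" .
  thus ?thesis using g(1) mult_le_cancel2 by blast
qed

lemma tot_mult_p:
  assumes "prime p" "p dvd t"
  shows "totient (t * p) = p * totient t"
proof -
  have "gcd t p = p" using assms by (simp add: gcd_nat.absorb2)
  hence "totient (t * p) * (p - 1) = totient t * (p - 1) * p"
    using totient_gcd[of t p] assms by (simp add: totient_prime)
  moreover have "p - 1 > 0" using assms prime_gt_1_nat by auto
  ultimately show ?thesis by simp
qed



definition FF :: "nat \<Rightarrow> real" where
  "FF x = (\<Prod>p\<in>prime_factors x. 1 - 1 / real p)"

lemma tot_FF: "real (totient x) = real x * FF x"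
  by (simp add: FF_def totient_formula2)

lemma fac01: "p \<in> prime_factors x \<Longrightarrow> 1 - 1 / real p \<in> {0..1}"
proof -
  assume "p \<in> prime_factors x"
  hence "prime p" by auto
  hence "real p \<ge> 1" using prime_ge_1_nat by simp
  thus ?thesis by (simp add: field_simps)
qed

lemma prod01:
  fixes f :: "'a \<Rightarrow> real"
  assumes "\<And>x. x \<in> A \<Longrightarrow> f x \<in> {0..1}"
  shows "prod f A \<in> {0..1}"
  using assms
proof (induction A rule: infinite_finite_induct)
  case (insert x A)
  thus ?case by (auto intro: mult_le_one)
qed auto

lemma Wprod:
  fixes f :: "'a \<Rightarrow> real"
  assumes "\<And>x. x \<in> A \<Longrightarrow> f x \<in> {0..1}"
  shows "1 - sum f A \<le> (\<Prod>x\<in>A. 1 - f x)"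
  using assms
proof (induction A rule: infinite_finite_induct)
  case (insert x A)
  have p: "(\<Prod>x\<in>A. 1 - f x) \<in> {0..1}" using insert by (intro prod01) auto
  have fx: "f x \<in> {0..1}" using insert by auto
  have ih: "1 - sum f A \<le> (\<Prod>x\<in>A. 1 - f x)" using insert by auto
  have "1 - sum f (insert x A) = (1 - sum f A) - f x" using insert by simp
  also have "\<dots> \<le> (\<Prod>x\<in>A. 1 - f x) - f x * (\<Prod>x\<in>A. 1 - f x)"
  proof -
    have "f x * (\<Prod>x\<in>A. 1 - f x) \<le> f x" using p fx by (simp add: mult_left_le)
    thus ?thesis using ih by linarith
  qed
  also have "\<dots> = (\<Prod>x\<in>insert x A. 1 - f x)" using insert by (simp add: algebra_simps)
  finally show ?case .
qed auto

lemma FF_anti: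
  assumes "prime_factors x \<subseteq> prime_factors n" "n > 0"
  shows "FF n \<le> FF x"
proof -
  have fin: "finite (prime_factors n)" by simp
  have "FF n = FF x * (\<Prod>p\<in>prime_factors n - prime_factors x. 1 - 1 / real p)"
    unfolding FF_def using prod.subset_diff[OF assms(1) fin] by (simp add: mult.commute)
  moreover have "(\<Prod>p\<in>prime_factors n - prime_factors x. 1 - 1 / real p) \<in> {0..1}"
    by (intro prod01 fac01) auto
  moreover have "FF x \<ge> 0" unfolding FF_def using prod01[of "prime_factors x"] fac01 by auto
  ultimately show ?thesis by (simp add: mult_left_le)
qed

lemma pf_rad:
  "prime_factors (\<Prod>(prime_factors n)) = prime_factors (n::nat)"
proof -
  have "prime_factors (prod id (prime_factors n)) = \<Union>((prime_factors \<circ> id) ` prime_factors n)"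
    by (rule prime_factors_prod) auto
  also have "\<dots> = prime_factors n"
  proof -
    have "\<And>p. p \<in> prime_factors n \<Longrightarrow> prime_factors p = {p}"
      by (simp add: prime_prime_factors in_prime_factors_iff)
    thus ?thesis by auto
  qed
  finally show ?thesis by simp
qed

lemma case_i:
  assumes "n > 0" "2 * totient (\<Prod>(prime_factors n)) \<ge> \<Prod>(prime_factors n)"
    "x dvd n" "x > 0"
  shows "x \<le> 2 * totient x"
proof -
  define R where "R = \<Prod>(prime_factors n)"
  have R0: "R > 0" unfolding R_def by (auto intro!: prod_pos simp: in_prime_factors_iff prime_gt_0_nat)
  have "real R \<le> 2 * real (totient R)" using assms(2) unfolding R_def by linarith
  also have "real (totient R) = real R * FF n" unfolding tot_FF FF_def R_def pf_rad ..
  finally have "1 \<le> 2 * FF n" using R0 by simp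
  moreover have "FF n \<le> FF x"
    by (rule FF_anti) (use assms in \<open>auto simp: in_prime_factors_iff intro: dvd_trans\<close>)
  ultimately have "1 \<le> 2 * FF x" by simp
  hence "real x \<le> 2 * (real x * FF x)" using assms(4)
    by (metis mult.left_commute mult_cancel_left1 mult_le_cancel_left_pos of_nat_0_less_iff)
  also have "\<dots> = real (2 * totient x)" by (simp add: tot_FF)
  finally show ?thesis by linarith
qed



lemma pf_sub: "x dvd n \<Longrightarrow> n > 0 \<Longrightarrow> prime_factors x \<subseteq> prime_factors (n::nat)"
  by (auto simp: in_prime_factors_iff intro: dvd_trans)

lemma case_ii_gen:
  assumes "n > 0" "r = card (prime_factors n)" "p1 = Min (prime_factors n)"
    "\<forall>s\<in>prime_factors n. s \<noteq> p1 \<longrightarrow> r + 1 \<le> s" "x dvd n" "x > 0"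
  shows "real (r+1) * FF x \<ge> (real (r+1) - real (card (prime_factors x - {p1}))) / 2"
proof -
  define S where "S = prime_factors x - {p1}"
  define c where "c = card S"
  have sub: "prime_factors x \<subseteq> prime_factors n" using pf_sub assms by auto
  have FFeq: "FF x = (\<Prod>p\<in>prime_factors x \<inter> {p1}. 1 - 1 / real p) * (\<Prod>p\<in>S. 1 - 1 / real p)"
  proof -
    have "prime_factors x - prime_factors x \<inter> {p1} = S" unfolding S_def by auto
    thus ?thesis unfolding FF_def using prod.subset_diff[of "prime_factors x \<inter> {p1}" "prime_factors x" "\<lambda>p. 1 - 1 / real p"]
      by (simp add: mult.commute)
  qed
  have A: "(\<Prod>p\<in>prime_factors x \<inter> {p1}. 1 - 1 / real p) \<ge> 1/2"
  proof (cases "p1 \<in> prime_factors x")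
    case True
    hence "prime_factors x \<inter> {p1} = {p1}" by auto
    moreover have "real p1 \<ge> 2" using True prime_ge_2_nat by auto
    ultimately show ?thesis by (simp add: field_simps)
  next
    case False
    hence "prime_factors x \<inter> {p1} = {}" by auto
    thus ?thesis by simp
  qed
  have B: "(\<Prod>p\<in>S. 1 - 1 / real p) \<ge> 1 - c / real (r+1)"
  proof -
    have "1 - (\<Sum>p\<in>S. 1 / real p) \<le> (\<Prod>p\<in>S. 1 - 1 / real p)"
    proof (rule Wprod)
      fix p assume "p \<in> S"
      hence "real p \<ge> 1" unfolding S_def using prime_ge_1_nat by auto
      thus "1 / real p \<in> {0..1}" by simp
    qed
    moreover have "(\<Sum>p\<in>S. 1 / real p) \<le> real (card S) * (1 / real (r+1))"
    proof (rule sum_bounded_above)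
      fix p assume "p \<in> S"
      hence "r + 1 \<le> p" using assms(4) sub unfolding S_def by auto
      thus "1 / real p \<le> 1 / real (r+1)" by (simp add: frac_le)
    qed
    ultimately show ?thesis unfolding c_def by simp
  qed
  have "c \<le> r" unfolding c_def S_def assms(2) using sub by (intro card_mono) auto
  hence L0: "1 - c / real (r+1) \<ge> 0" by (simp add: field_simps)
  have A0: "(\<Prod>p\<in>prime_factors x \<inter> {p1}. 1 - 1 / real p) \<ge> 0" using A by linarith
  have "FF x \<ge> 1/2 * (1 - c / real (r+1))"
    unfolding FFeq by (rule mult_mono[OF A B A0 L0])
  hence "real (r+1) * FF x \<ge> real (r+1) * (1/2 * (1 - c / real (r+1)))"
    by (simp add: mult_left_mono)
  also have "real (r+1) * (1/2 * (1 - c / real (r+1))) = (real (r+1) - c) / 2"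
    by (simp add: field_simps)
  finally show ?thesis unfolding c_def S_def .
qed

lemma case_ii:
  assumes "n > 0" "r = card (prime_factors n)" "p1 = Min (prime_factors n)"
    "\<forall>s\<in>prime_factors n. s \<noteq> p1 \<longrightarrow> r + 1 \<le> s" "x dvd n" "x > 0" "r \<ge> 1"
  shows "x \<le> (r+1) * totient x"
    and "p \<in> prime_factors n \<Longrightarrow> p \<noteq> p1 \<Longrightarrow> \<not> p dvd x \<Longrightarrow> x < (r+1) * totient x"
proof -
  have fin: "finite (prime_factors n)" by simp
  have ne: "prime_factors n \<noteq> {}" using assms(2,7) by auto
  have p1: "p1 \<in> prime_factors n" using Min_in[OF fin ne] assms(3) by simp
  have sub: "prime_factors x \<subseteq> prime_factors n" using pf_sub assms by auto
  have g: "real (r+1) * FF x \<ge> (real (r+1) - real (card (prime_factors x - {p1}))) / 2"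
    by (rule case_ii_gen[OF assms(1-6)])
  have tx: "real ((r+1) * totient x) = real x * (real (r+1) * FF x)"
    by (simp add: tot_FF algebra_simps)
  have c1: "card (prime_factors x - {p1}) \<le> r - 1"
  proof -
    have "card (prime_factors x - {p1}) \<le> card (prime_factors n - {p1})"
      using sub by (intro card_mono) auto
    also have "\<dots> = r - 1" using p1 assms(2) by simp
    finally show ?thesis .
  qed
  have "card (prime_factors x - {p1}) + 1 \<le> r" using c1 assms(7) by linarith
  hence "real (card (prime_factors x - {p1})) + 1 \<le> real r"
    by (metis of_nat_1 of_nat_add of_nat_le_iff)
  hence "real (r+1) * FF x \<ge> 1" using g by simp
  hence "real x * 1 \<le> real x * (real (r+1) * FF x)" by (intro mult_left_mono) auto
  thus "x \<le> (r+1) * totient x" unfolding tx[symmetric] by linarith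
  assume p: "p \<in> prime_factors n" "p \<noteq> p1" "\<not> p dvd x"
  have c2: "card (prime_factors x - {p1}) \<le> r - 2"
  proof -
    have "card (prime_factors x - {p1}) \<le> card (prime_factors n - {p1} - {p})"
      using sub p by (intro card_mono) auto
    also have "\<dots> = r - 2" using p1 p assms(2) by simp
    finally show ?thesis .
  qed
  have "r \<ge> 2" proof -
    have "{p, p1} \<subseteq> prime_factors n" using p p1 by auto
    hence "card {p, p1} \<le> r" using assms(2) card_mono[OF fin] by metis
    thus ?thesis using p by simp
  qed
  hence "card (prime_factors x - {p1}) + 2 \<le> r" using c2 by linarith
  hence "real (card (prime_factors x - {p1})) + 2 \<le> real r"
    by (metis of_nat_numeral of_nat_add of_nat_le_iff)
  hence "real (r+1) * FF x > 1" using g by simp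
  hence "real x * 1 < real x * (real (r+1) * FF x)" using assms(6) by (intro mult_strict_left_mono) auto
  thus "x < (r+1) * totient x" unfolding tx[symmetric] by linarith
qed



lemma key:
  fixes t m' q p r :: nat
  assumes t0: "t > 0" and m0: "m' > 0" and q: "prime q" and p: "prime p" and pm: "p dvd m'" and qp: "q < p"
    and H: "(t \<le> 2 * totient t \<and> t * m' \<le> 2 * totient (t * m')) \<or>
            (r * (q - 1) \<le> p - 1 \<and> t \<le> (r+1) * totient t \<and> (\<not> p dvd t \<longrightarrow> t < (r+1) * totient t))"
  shows "t * q < totient (t * m') + t + totient (t * q)"
proof -
  obtain q' where q': "q = Suc q'" using q by (metis not0_implies_Suc prime_gt_0_nat neq0_conv)
  obtain p' where p': "p = Suc p'" using p by (metis not0_implies_Suc prime_gt_0_nat neq0_conv)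
  define f where "f = totient t"
  have f0: "f > 0" using t0 by (simp add: f_def)
  have tq: "f * q' \<le> totient (t * q)"
    using tot_super[of t q] t0 q by (simp add: f_def totient_prime q' prime_gt_0_nat)
  have tq2: "t * q = t * q' + t" by (simp add: q')
  from H show ?thesis
  proof
    assume A: "t \<le> 2 * totient t \<and> t * m' \<le> 2 * totient (t * m')"
    have "p \<le> m'" using pm m0 by (simp add: dvd_imp_le)
    hence h1: "t * p \<le> t * m'" by simp
    have h2: "t * q + t \<le> t * p" using qp by (metis Suc_leI mult_Suc_right mult_le_mono2 add.commute)
    have h4: "t * q' \<le> 2 * (f * q')" using A by (simp add: f_def)
    show ?thesis using A h1 h2 h4 tq tq2 t0 by linarith
  next
    assume B: "r * (q - 1) \<le> p - 1 \<and> t \<le> (r+1) * totient t \<and> (\<not> p dvd t \<longrightarrow> t < (r+1) * totient t)"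
    hence B1: "r * q' \<le> p'" and B2: "t \<le> (r+1) * f" and B3: "\<not> p dvd t \<Longrightarrow> t < (r+1) * f"
      by (auto simp: q' p' f_def)
    have a3: "q' * t \<le> q' * ((r+1) * f)" using B2 by simp
    have e2: "q' * ((r+1) * f) = r * q' * f + f * q'" by (simp add: algebra_simps)
    show ?thesis
    proof (cases "p dvd t")
      case True
      have "totient (t * p) \<le> totient (t * m')"
        using pm t0 m0 by (intro totient_dvd_mono) auto
      hence a1: "p * f \<le> totient (t * m')" using tot_mult_p[OF p True] by (simp add: f_def)
      have a2: "(r * q' + 1) * f \<le> p * f" using B1 p' by simp
      have e1: "(r * q' + 1) * f = r * q' * f + f" by (simp add: algebra_simps)
      have e3: "q' * t = t * q'" by simp
      show ?thesis using a1 a2 a3 e1 e2 e3 f0 tq tq2 by linarith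
    next
      case False
      have "totient p \<le> totient m'" using pm m0 by (intro totient_dvd_mono) auto
      hence "p' \<le> totient m'" using p by (simp add: totient_prime p')
      hence "f * p' \<le> f * totient m'" by simp
      also have "\<dots> \<le> totient (t * m')" using tot_super[OF t0 m0] by (simp add: f_def)
      finally have a1: "f * p' \<le> totient (t * m')" .
      have a2': "r * q' * f \<le> p' * f" using B1 by (rule mult_le_mono1)
      have e6: "p' * f = f * p'" by (rule mult.commute)
      have a2: "r * q' * f \<le> f * p'" using a2' e6 by simp
      have q'0: "q' > 0" using prime_ge_2_nat[OF q] q' by simp
      have a4: "q' * t < q' * ((r+1) * f)" using B3[OF False] q'0 by simp
      have e3: "q' * t = t * q'" by simp
      have e4: "(r+1) * f = r * f + f" by simp
      have e5: "r * q' * f = q' * (r * f)" by simp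
      show ?thesis using a1 a2 a4 e2 e3 e4 e5 tq tq2 by linarith
    qed
  qed
qed



lemma chain:
  assumes H: "let ps = sorted_list_of_set P in \<forall>j. Suc j < length ps \<longrightarrow> totient (ps ! Suc j) \<ge> r * totient (ps ! j)"
    and fin: "finite P" and pr: "\<forall>x\<in>P. prime x" and r1: "r \<ge> 1"
    and ab: "a \<in> P" "b \<in> P" "a < b"
  shows "r * (a - 1) \<le> b - 1"
proof -
  define ps where "ps = sorted_list_of_set P"
  have H': "\<And>j. Suc j < length ps \<Longrightarrow> r * totient (ps ! j) \<le> totient (ps ! Suc j)"
    using H unfolding ps_def Let_def by auto
  have set: "set ps = P" and so: "sorted ps" using fin by (auto simp: ps_def)
  obtain i where i: "i < length ps" "ps ! i = a" using ab(1) set by (metis in_set_conv_nth)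
  obtain k where k: "k < length ps" "ps ! k = b" using ab(2) set by (metis in_set_conv_nth)
  have ik: "i < k"
  proof (rule ccontr)
    assume "\<not> i < k"
    hence "ps ! k \<le> ps ! i" using so i by (intro sorted_nth_mono) auto
    thus False using i k ab by simp
  qed
  have "\<forall>k. i < k \<longrightarrow> k < length ps \<longrightarrow> r * totient (ps ! i) \<le> totient (ps ! k)"
  proof (intro allI)
    fix k show "i < k \<longrightarrow> k < length ps \<longrightarrow> r * totient (ps ! i) \<le> totient (ps ! k)"
    proof (induction k)
      case 0 then show ?case by simp
    next
      case (Suc k)
      show ?case
      proof (intro impI)
        assume a: "i < Suc k" "Suc k < length ps"
        show "r * totient (ps ! i) \<le> totient (ps ! Suc k)"
        proof (cases "i = k")
          case True thus ?thesis using H' a by simp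
        next
          case False
          hence "r * totient (ps ! i) \<le> totient (ps ! k)" using Suc a by simp
          also have "\<dots> \<le> r * totient (ps ! k)" using r1 by simp
          also have "\<dots> \<le> totient (ps ! Suc k)" using H' a by simp
          finally show ?thesis .
        qed
      qed
    qed
  qed
  hence "r * totient a \<le> totient b" using ik k i by auto
  thus ?thesis using pr ab by (simp add: totient_prime)
qed



lemma gcd_modn: "d dvd n \<Longrightarrow> gcd (d mod n) n = (d::nat)"
  by (metis gcd.commute gcd_nat.absorb_iff1 gcd_red_nat)

lemma main_step:
  fixes n m q p t m' \<beta> r :: nat
  assumes n0: "n > 0" and mn: "m dvd n" and q: "prime q" and p: "prime p" and qp: "q < p"
    and m: "m = q ^ \<beta> * m'" and nq: "\<not> q dvd m'" and b0: "\<beta> > 0" and pm: "p dvd m'"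
    and H: "let t = n div m in (t \<le> 2 * totient t \<and> t * m' \<le> 2 * totient (t * m')) \<or>
            (r * (q - 1) \<le> p - 1 \<and> t \<le> (r+1) * totient t \<and> (\<not> p dvd t \<longrightarrow> t < (r+1) * totient t))"
  shows "pg_deg n (m mod n) > pg_deg n ((m div q) mod n)"
proof -
  define t where "t = n div m"
  have m0: "m > 0" using mn n0 by (metis dvd_0_left_iff gr0I less_irrefl)
  have m'0: "m' > 0" using m m0 by auto
  have nt: "n = t * m" using mn by (simp add: t_def)
  have t0: "t > 0" using nt n0 by auto
  define G' where "G' = q ^ (\<beta> - 1) * m'"
  have mG: "m = q * G'" using b0 m unfolding G'_def by (cases \<beta>) auto
  have G'd: "m div q = G'" using mG q prime_gt_0_nat by simp
  have G'0: "G' > 0" using mG m0 by auto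
  have G'n: "G' dvd n" using mG mn dvd_mult_right by blast
  have G'm: "G' dvd m" using mG by simp
  have nG': "n div G' = t * q" using nt mG G'0 by simp
  have nq\<beta>: "n div q ^ \<beta> = t * m'" using nt m q prime_gt_0_nat by simp
  have pG': "p dvd G'" using pm unfolding G'_def by simp
  have G'lt: "G' < m" using n_less_m_mult_n[OF G'0, of q] prime_gt_1_nat[OF q] mG by simp
  have G'ne: "G' \<noteq> m" using G'lt by simp
  have G'ltn: "G' < n" using G'lt dvd_imp_le[OF mn n0] by simp
  have qbn: "\<not> q ^ \<beta> dvd G'"
  proof
    assume "q ^ \<beta> dvd G'"
    moreover have "q ^ \<beta> = q ^ (\<beta> - 1) * q" using b0 by (cases \<beta>) (auto simp: mult.commute)
    ultimately have d: "q ^ (\<beta> - 1) * q dvd q ^ (\<beta> - 1) * m'"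
      unfolding G'_def by simp
    have z: "q ^ (\<beta> - 1) \<noteq> 0" using q prime_gt_0_nat by simp
    have "q dvd m'" using d z by (simp only: nat_mult_dvd_cancel_disj) simp
    thus False using nq by simp
  qed
  have pnq: "\<not> p dvd q ^ \<beta>"
  proof
    assume "p dvd q ^ \<beta>"
    hence "p dvd q" using prime_dvd_power[OF p] by blast
    hence "p = q" using primes_dvd_imp_eq[OF p q] by blast
    thus False using qp by simp
  qed
  have dm: "pg_deg n (m mod n) = card (TT n m) - 1"
    using deg_TT[of n "m mod n"] n0 gcd_modn[OF mn] by simp
  have dG: "pg_deg n ((m div q) mod n) = card (TT n G') - 1"
    using deg_TT[of n "G' mod n"] n0 gcd_modn[OF G'n] G'd by simp
  have finT: "\<And>G. finite (TT n G)" by (simp add: TT_def)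
  have G'inT: "G' \<in> TT n G'"
  proof -
    show ?thesis using G'ltn using G'n by (simp add: TT_def gcd_nat.absorb1)
  qed
  define Z where "Z = {b. b < n \<and> gcd b n = q ^ \<beta>}"
  define M' where "M' = {b. b < n \<and> G' dvd b}"
  define M where "M = {b. b < n \<and> m dvd b}"
  define E where "E = {b. b < n \<and> gcd b n = G'}"
  have ZX: "Z \<subseteq> TT n m - TT n G'"
  proof
    fix b assume b: "b \<in> Z"
    have "q ^ \<beta> dvd m" using m by simp
    moreover have "\<not> G' dvd q ^ \<beta>" using pG' pnq dvd_trans by blast
    moreover from b have bg: "gcd b n = q ^ \<beta>" "b < n" unfolding Z_def by auto
    have nb: "\<not> (G' dvd b \<and> G' dvd n)"
    proof
      assume "G' dvd b \<and> G' dvd n"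
      hence "G' dvd gcd b n" by simp
      thus False using bg \<open>\<not> G' dvd q ^ \<beta>\<close> by simp
    qed
    ultimately have "b \<in> TT n m" "b \<notin> TT n G'" using qbn nb bg by (simp_all add: TT_def)
    thus "b \<in> TT n m - TT n G'" by simp
  qed
  have YW: "TT n G' - TT n m \<subseteq> M' - (M \<union> E)"
  proof
    fix b assume b: "b \<in> TT n G' - TT n m"
    hence bn: "b < n" and c1: "G' dvd gcd b n \<or> gcd b n dvd G'" and c2: "\<not> m dvd gcd b n" "\<not> gcd b n dvd m"
      unfolding TT_def by auto
    have "\<not> gcd b n dvd G'" using c2 G'm dvd_trans by blast
    hence g: "G' dvd gcd b n" using c1 by blast
    hence "G' dvd b" by (meson dvd_trans gcd_dvd1)
    moreover have "\<not> m dvd b" using c2 mn by simp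
    moreover have "gcd b n \<noteq> G'" using c2 G'm by auto
    ultimately show "b \<in> M' - (M \<union> E)" using bn unfolding M'_def M_def E_def by auto
  qed
  have cZ: "card Z = totient (t * m')"
  proof -
    have qm: "q ^ \<beta> dvd m" using m by simp
    hence "q ^ \<beta> dvd n" using mn dvd_trans by blast
    moreover have "q ^ \<beta> \<noteq> n"
    proof
      assume "q ^ \<beta> = n"
      moreover have "p dvd m" using pm m by simp
      ultimately have "p dvd q ^ \<beta>" using mn dvd_trans by metis
      thus False using pnq by simp
    qed
    ultimately show ?thesis unfolding Z_def using card_gcd[OF n0] nq\<beta> by simp
  qed
  have cW: "card (M' - (M \<union> E)) = t * q - t - totient (t * q)"
  proof -
    have sub: "M \<union> E \<subseteq> M'"
    proof
      fix b assume "b \<in> M \<union> E"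
      thus "b \<in> M'" unfolding M_def E_def M'_def using G'm dvd_trans gcd_dvd1 by blast
    qed
    have disj: "M \<inter> E = {}"
    proof -
      { fix b assume "b \<in> M" "b \<in> E"
        hence "m dvd gcd b n" "gcd b n = G'" using mn unfolding M_def E_def by auto
        hence False using G'ne G'm by (simp add: dvd_antisym) }
      thus ?thesis by auto
    qed
    have "card M' = t * q" unfolding M'_def using card_mult[OF G'0 G'n] nG' by simp
    moreover have "card M = t" unfolding M_def using card_mult[OF m0 mn] nt m0 by simp
    moreover have "card E = totient (t * q)" unfolding E_def
      using card_gcd[OF n0 G'n] nG' G'ltn by simp
    moreover have "card (M \<union> E) = card M + card E"
      by (rule card_Un_disjoint) (use disj in \<open>auto simp: M_def E_def\<close>)
    moreover have "card (M' - (M \<union> E)) = card M' - card (M \<union> E)"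
      by (rule card_Diff_subset) (use sub in \<open>auto simp: M_def E_def intro: finite_subset\<close>)
    ultimately show ?thesis by simp
  qed
  have k: "t * q < totient (t * m') + t + totient (t * q)"
    by (rule key[OF t0 m'0 q p pm qp]) (use H in \<open>simp add: t_def Let_def\<close>)
  have "card (TT n G' - TT n m) \<le> t * q - t - totient (t * q)"
    using card_mono[OF _ YW] cW by (simp add: M'_def)
  also have "\<dots> < card Z"
  proof -
    have gen: "\<And>a b c d::nat. a < d + b + c \<Longrightarrow> d > 0 \<Longrightarrow> a - b - c < d" by linarith
    have "totient (t * m') > 0" using t0 m'0 by simp
    thus ?thesis unfolding cZ by (rule gen[OF k])
  qed
  also have "\<dots> \<le> card (TT n m - TT n G')" using card_mono[OF _ ZX] finT by simp
  finally have lt: "card (TT n G' - TT n m) < card (TT n m - TT n G')" .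
  have e1: "card (TT n m) = card (TT n m - TT n G') + card (TT n m \<inter> TT n G')"
    using card_Int_Diff[OF finT, of m "TT n G'"] by (simp only: add.commute)
  have e2: "card (TT n G') = card (TT n G' - TT n m) + card (TT n m \<inter> TT n G')"
    using card_Int_Diff[OF finT, of G' "TT n m"] by (simp only: add.commute Int_commute)
  have c0: "card (TT n G') > 0" using G'inT finT[of G'] card_gt_0_iff by blast
  have "card (TT n G') < card (TT n m)" using lt e1 e2 by linarith
  hence "card (TT n G') - 1 < card (TT n m) - 1" using c0 by (intro diff_less_mono) auto
  thus ?thesis unfolding dm dG .
qed



theorem proposition4p1:
  fixes n m :: nat
  assumes "card (prime_factors n) \<ge> 2"
    and "m dvd n"
    and "card (prime_factors m) \<ge> 2"
    and "2 * totient (\<Prod>(prime_factors n)) \<ge> \<Prod>(prime_factors n)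
         \<or> (let ps = sorted_list_of_set (prime_factors n) in
              \<forall>j. Suc j < length ps \<longrightarrow>
                totient (ps ! Suc j) \<ge> card (prime_factors n) * totient (ps ! j))"
  shows "\<forall>q \<in> prime_factors m. q < Max (prime_factors m) \<longrightarrow>
           pg_deg n (m mod n) > pg_deg n ((m div q) mod n)"
proof (intro ballI impI)
  fix q assume qm: "q \<in> prime_factors m" and qlt: "q < Max (prime_factors m)"
  have n0: "n > 0" using assms(1) by (cases "n = 0") auto
  have m0: "m > 0" using assms(3) by (cases "m = 0") auto
  define p where "p = Max (prime_factors m)"
  have nem: "prime_factors m \<noteq> {}" using assms(3) by auto
  have pm: "p \<in> prime_factors m" unfolding p_def by (rule Max_in) (use nem in auto)
  have q: "prime q" "q dvd m" using qm by auto
  have p: "prime p" "p dvd m" using pm by auto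
  have qp: "q < p" using qlt p_def by simp
  have subm: "prime_factors m \<subseteq> prime_factors n" using pf_sub[OF assms(2) n0] .
  obtain m' where m': "m = q ^ multiplicity q m * m'" "\<not> q dvd m'"
  proof -
    have "q \<noteq> 1" using q(1) by auto
    thus ?thesis using multiplicity_decompose'[of m q] m0 that by auto
  qed
  define \<beta> where "\<beta> = multiplicity q m"
  have b0: "\<beta> > 0"
  proof (rule ccontr)
    assume "\<not> \<beta> > 0"
    hence "m = m'" using m' unfolding \<beta>_def by simp
    thus False using q m' by simp
  qed
  have pm': "p dvd m'"
  proof -
    have "p dvd q ^ \<beta> * m'" using p m' unfolding \<beta>_def by simp
    moreover have "\<not> p dvd q ^ \<beta>"
    proof
      assume "p dvd q ^ \<beta>"
      hence "p dvd q" using prime_dvd_power[OF p(1)] by blast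
      hence "p = q" using primes_dvd_imp_eq[OF p(1) q(1)] by blast
      thus False using qp by simp
    qed
    ultimately show ?thesis using prime_dvd_mult_iff[OF p(1)] by blast
  qed
  have mb: "m = q ^ \<beta> * m'" using m' unfolding \<beta>_def by simp
  define t where "t = n div m"
  have nt: "n = t * m" using assms(2) by (simp add: t_def)
  have t0: "t > 0" using nt n0 by auto
  have tn: "t dvd n" using nt by simp
  have tmn: "t * m' dvd n" using nt mb by (simp add: mult.left_commute)
  have m'0: "m' > 0" using m0 mb by auto
  define r where "r = card (prime_factors n)"
  have H: "(t \<le> 2 * totient t \<and> t * m' \<le> 2 * totient (t * m')) \<or>
            (r * (q - 1) \<le> p - 1 \<and> t \<le> (r+1) * totient t \<and> (\<not> p dvd t \<longrightarrow> t < (r+1) * totient t))"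
    using assms(4)
  proof
    assume i: "2 * totient (\<Prod>(prime_factors n)) \<ge> \<Prod>(prime_factors n)"
    have "t \<le> 2 * totient t" by (rule case_i[OF n0 i tn t0])
    moreover have "t * m' \<le> 2 * totient (t * m')" by (rule case_i[OF n0 i tmn]) (use t0 m'0 in simp)
    ultimately show ?thesis by blast
  next
    assume ii: "let ps = sorted_list_of_set (prime_factors n) in
              \<forall>j. Suc j < length ps \<longrightarrow>
                totient (ps ! Suc j) \<ge> card (prime_factors n) * totient (ps ! j)"
    have r1: "r \<ge> 1" using assms(1) r_def by simp
    have ch: "\<And>a b. a \<in> prime_factors n \<Longrightarrow> b \<in> prime_factors n \<Longrightarrow> a < b \<Longrightarrow> r * (a - 1) \<le> b - 1"
      by (rule chain[OF ii[folded r_def]]) (use r1 in auto)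
    define p1 where "p1 = Min (prime_factors n)"
    have fin: "finite (prime_factors n)" by simp
    have nen: "prime_factors n \<noteq> {}" using assms(1) by auto
    have p1in: "p1 \<in> prime_factors n" unfolding p1_def using Min_in[OF fin nen] .
    have p1_2: "p1 \<ge> 2" using p1in prime_ge_2_nat by auto
    have big: "\<forall>s\<in>prime_factors n. s \<noteq> p1 \<longrightarrow> r + 1 \<le> s"
    proof (intro ballI impI)
      fix s assume s: "s \<in> prime_factors n" "s \<noteq> p1"
      have "p1 \<le> s" unfolding p1_def using s fin by simp
      hence "p1 < s" using s by simp
      hence "r * (p1 - 1) \<le> s - 1" using ch p1in s by blast
      moreover have "r \<le> r * (p1 - 1)" using p1_2 by (simp add: Suc_le_eq)
      moreover have "s \<ge> 2" using s(1) prime_ge_2_nat by auto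
      ultimately show "r + 1 \<le> s" by linarith
    qed
    have pn: "p \<in> prime_factors n" "q \<in> prime_factors n" using pm qm subm by auto
    have c1: "r * (q - 1) \<le> p - 1" using ch pn qp by blast
    have pp1: "p \<noteq> p1"
    proof -
      have "p1 \<le> q" unfolding p1_def using pn fin by simp
      thus ?thesis using qp by simp
    qed
    have c2: "t \<le> (r+1) * totient t" by (rule case_ii(1)[OF n0 r_def p1_def big tn t0 r1])
    have c3: "\<not> p dvd t \<longrightarrow> t < (r+1) * totient t"
      using case_ii(2)[OF n0 r_def p1_def big tn t0 r1 pn(1) pp1] by blast
    show ?thesis using c1 c2 c3 by blast
  qed
  show "pg_deg n (m mod n) > pg_deg n ((m div q) mod n)"
    by (rule main_step[OF n0 assms(2) q(1) p(1) qp mb m'(2) b0 pm', of r])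
       (use H in \<open>simp add: t_def Let_def\<close>)
qed


end
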